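(* Let $\mathcal{G}$ be a maximal ancestral graph (MAG) with vertex set $V$, and let $c_{\mathcal{G}}:\mathcal{P}(V)\to\{0,1\}$ be its characteristic imset, i.e. $c_{\mathcal{G}}(S)=1$ if $S\in\mathcal{S}(\mathcal{G})$ and $c_{\mathcal{G}}(S)=0$ otherwise. Define the imset $$u_{\mathcal{G}}(B)=\sum_{A:\,B\subseteq A\subseteq V}(-1)^{|A\setminus B|}\bigl(1-c_{\mathcal{G}}(A)\bigr),\qquad B\subseteq V.$$ Then $$u_{\mathcal{G}}=\delta_{V}-\delta_{\emptyset}-\sum_{H\in\mathcal{H}(\mathcal{G})}\ \sum_{W\subseteq H}(-1)^{|H\setminus W|}\,\delta_{W\cup \mathrm{tail}(H)} .$$
   Context: A mixed graph on a finite vertex set $V$ has directed edges $a\to b$ and bidirected edges $a\leftrightarrow b$, with at most one edge between any pair of vertices; it is an acyclic directed mixed graph (ADMG) if it has no directed cycle. Write $\mathrm{pa}(v)=\{w:w\to v\}$, $\mathrm{sib}(v)=\{w:w\leftrightarrow v\}$, $\mathrm{an}(v)$ for the set of $w$ with a directed path $w\to\cdots\to v$ (including $v$), $\mathrm{de}(v)$ for the set of $w$ with a directed path $v\to\cdots\to w$ (including $v$); these are extended to sets by taking unions. For $W\subseteq V$, $\mathcal{G}_W$ is the induced subgraph and $\mathrm{dis}_W(v)$ is the set of vertices joined to $v$ by a path of bidirected edges in $\mathcal{G}_W$ (including $v$). A path between $a$ and $b$ is m-connecting given $C$ ($a,b\notin C$) if every non-endpoint vertex that is a collider (both adjacent path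 edges have an arrowhead at it) lies in $\mathrm{an}(C)$ and every other non-endpoint lies outside $C$; disjoint sets $A,B$ are m-separated by $C$ if there is no m-connecting path given $C$ between any $a\in A$ and $b\in B$. A MAG is an ADMG such that $\mathrm{sib}(v)\cap\mathrm{an}(v)=\emptyset$ for all $v$, and every pair of nonadjacent vertices is m-separated by some set. For $W\subseteq V$, $\mathrm{barren}(W)=\{w\in W:\mathrm{de}(w)\cap W=\{w\}\}$. A nonempty set $H$ is a head if $\mathrm{barren}(H)=H$ and $H$ is contained in a single bidirected-connected component (district) of $\mathcal{G}_{\mathrm{an}(H)}$; $\mathcal{H}(\mathcal{G})$ is the set of heads. The tail is $\mathrm{tail}(H)=(\mathrm{dis}_{\mathrm{an}(H)}(H)\setminus H)\cup\mathrm{pa}(\mathrm{dis}_{\mathrm{an}(H)}(H))$. The parametrizing sets are $\mathcal{S}(\mathcal{G})=\{H\cup A: H\in\mathcal{H}(\mathcal{G}),\ A\subseteq\mathrm{tail}(H)\}$. An imset is a function $\mathcal{P}(V)\to\mathbb{Z}$; $\delta_A$ is the imset equal to $1$ at $A$ and $0$ elsewhere. *)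

theory Defs
  imports Main
begin

text \<open>A mixed graph is given by a vertex set V, a set D of directed edges
  (a pair (a,b) means a \<rightarrow> b) and a symmetric set Bi of bidirected edges.\<close>

definition mixed_graph :: "'v set \<Rightarrow> ('v \<times> 'v) set \<Rightarrow> ('v \<times> 'v) set \<Rightarrow> bool" where
  "mixed_graph V D Bi \<longleftrightarrow> finite V \<and> D \<subseteq> V \<times> V \<and> Bi \<subseteq> V \<times> V \<and> sym Bi \<and>
     (\<forall>a. (a,a) \<notin> D \<and> (a,a) \<notin> Bi) \<and>
     (\<forall>a b. (a,b) \<in> D \<longrightarrow> (b,a) \<notin> D \<and> (a,b) \<notin> Bi)"

definition admg :: "'v set \<Rightarrow> ('v \<times> 'v) set \<Rightarrow> ('v \<times> 'v) set \<Rightarrow> bool" where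
  "admg V D Bi \<longleftrightarrow> mixed_graph V D Bi \<and> acyclic D"

definition pa :: "('v \<times> 'v) set \<Rightarrow> 'v \<Rightarrow> 'v set" where
  "pa D v = {w. (w,v) \<in> D}"

definition paS :: "('v \<times> 'v) set \<Rightarrow> 'v set \<Rightarrow> 'v set" where
  "paS D A = (\<Union>v\<in>A. pa D v)"

definition sib :: "('v \<times> 'v) set \<Rightarrow> 'v \<Rightarrow> 'v set" where
  "sib Bi v = {w. (w,v) \<in> Bi}"

definition an :: "'v set \<Rightarrow> ('v \<times> 'v) set \<Rightarrow> 'v \<Rightarrow> 'v set" where
  "an V D v = {w \<in> V. (w,v) \<in> D\<^sup>*}"

definition anS :: "'v set \<Rightarrow> ('v \<times> 'v) set \<Rightarrow> 'v set \<Rightarrow> 'v set" where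
  "anS V D A = (\<Union>v\<in>A. an V D v)"

definition de :: "'v set \<Rightarrow> ('v \<times> 'v) set \<Rightarrow> 'v \<Rightarrow> 'v set" where
  "de V D v = {w \<in> V. (v,w) \<in> D\<^sup>*}"

definition dis :: "('v \<times> 'v) set \<Rightarrow> 'v set \<Rightarrow> 'v \<Rightarrow> 'v set" where
  "dis Bi W v = {w \<in> W. (v,w) \<in> (Bi \<inter> (W \<times> W))\<^sup>*}"

definition disS :: "('v \<times> 'v) set \<Rightarrow> 'v set \<Rightarrow> 'v set \<Rightarrow> 'v set" where
  "disS Bi W A = (\<Union>v\<in>A. dis Bi W v)"

definition adjacent :: "('v \<times> 'v) set \<Rightarrow> ('v \<times> 'v) set \<Rightarrow> 'v \<Rightarrow> 'v \<Rightarrow> bool" where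
  "adjacent D Bi a b \<longleftrightarrow> (a,b) \<in> D \<or> (b,a) \<in> D \<or> (a,b) \<in> Bi"

definition arrowhead_at :: "('v \<times> 'v) set \<Rightarrow> ('v \<times> 'v) set \<Rightarrow> 'v \<Rightarrow> 'v \<Rightarrow> bool" where
  "arrowhead_at D Bi u v \<longleftrightarrow> (u,v) \<in> D \<or> (u,v) \<in> Bi"

text \<open>A path is a list of distinct vertices, consecutive ones adjacent
  (there is at most one edge between two vertices, so the edge is determined).\<close>
definition is_path :: "'v set \<Rightarrow> ('v \<times> 'v) set \<Rightarrow> ('v \<times> 'v) set \<Rightarrow> 'v list \<Rightarrow> bool" where
  "is_path V D Bi p \<longleftrightarrow> p \<noteq> [] \<and> distinct p \<and> set p \<subseteq> V \<and>
     (\<forall>i. Suc i < length p \<longrightarrow> adjacent D Bi (p ! i) (p ! Suc i))"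

definition m_connecting ::
  "'v set \<Rightarrow> ('v \<times> 'v) set \<Rightarrow> ('v \<times> 'v) set \<Rightarrow> 'v \<Rightarrow> 'v \<Rightarrow> 'v set \<Rightarrow> 'v list \<Rightarrow> bool" where
  "m_connecting V D Bi a b C p \<longleftrightarrow> is_path V D Bi p \<and> hd p = a \<and> last p = b \<and>
     a \<notin> C \<and> b \<notin> C \<and>
     (\<forall>i. 0 < i \<and> Suc i < length p \<longrightarrow>
        (if arrowhead_at D Bi (p ! (i - 1)) (p ! i) \<and> arrowhead_at D Bi (p ! Suc i) (p ! i)
         then p ! i \<in> anS V D C else p ! i \<notin> C))"

definition m_separated ::
  "'v set \<Rightarrow> ('v \<times> 'v) set \<Rightarrow> ('v \<times> 'v) set \<Rightarrow> 'v set \<Rightarrow> 'v set \<Rightarrow> 'v set \<Rightarrow> bool" where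
  "m_separated V D Bi A B C \<longleftrightarrow>
     (\<forall>a\<in>A. \<forall>b\<in>B. \<not> (\<exists>p. m_connecting V D Bi a b C p))"

definition MAG :: "'v set \<Rightarrow> ('v \<times> 'v) set \<Rightarrow> ('v \<times> 'v) set \<Rightarrow> bool" where
  "MAG V D Bi \<longleftrightarrow> admg V D Bi \<and> (\<forall>v\<in>V. sib Bi v \<inter> an V D v = {}) \<and>
     (\<forall>a\<in>V. \<forall>b\<in>V. a \<noteq> b \<and> \<not> adjacent D Bi a b \<longrightarrow>
        (\<exists>C. C \<subseteq> V - {a, b} \<and> m_separated V D Bi {a} {b} C))"

definition barren :: "'v set \<Rightarrow> ('v \<times> 'v) set \<Rightarrow> 'v set \<Rightarrow> 'v set" where
  "barren V D W = {w \<in> W. de V D w \<inter> W = {w}}"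

definition is_head :: "'v set \<Rightarrow> ('v \<times> 'v) set \<Rightarrow> ('v \<times> 'v) set \<Rightarrow> 'v set \<Rightarrow> bool" where
  "is_head V D Bi H \<longleftrightarrow> H \<noteq> {} \<and> H \<subseteq> V \<and> barren V D H = H \<and>
     (\<exists>v \<in> anS V D H. H \<subseteq> dis Bi (anS V D H) v)"

definition heads :: "'v set \<Rightarrow> ('v \<times> 'v) set \<Rightarrow> ('v \<times> 'v) set \<Rightarrow> 'v set set" where
  "heads V D Bi = {H. is_head V D Bi H}"

definition tail :: "'v set \<Rightarrow> ('v \<times> 'v) set \<Rightarrow> ('v \<times> 'v) set \<Rightarrow> 'v set \<Rightarrow> 'v set" where
  "tail V D Bi H = (disS Bi (anS V D H) H - H) \<union> paS D (disS Bi (anS V D H) H)"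

text \<open>Parametrizing sets; following the standard convention for characteristic
  imsets, the empty set is also counted as a parametrizing set.\<close>
definition param_sets :: "'v set \<Rightarrow> ('v \<times> 'v) set \<Rightarrow> ('v \<times> 'v) set \<Rightarrow> 'v set set" where
  "param_sets V D Bi = insert {} {H \<union> A | H A. H \<in> heads V D Bi \<and> A \<subseteq> tail V D Bi H}"

definition char_imset :: "'v set \<Rightarrow> ('v \<times> 'v) set \<Rightarrow> ('v \<times> 'v) set \<Rightarrow> 'v set \<Rightarrow> int" where
  "char_imset V D Bi S = (if S \<in> param_sets V D Bi then 1 else 0)"

definition delta :: "'v set \<Rightarrow> 'v set \<Rightarrow> int" where
  "delta A S = (if S = A then 1 else 0)"

definition u_imset :: "'v set \<Rightarrow> ('v \<times> 'v) set \<Rightarrow> ('v \<times> 'v) set \<Rightarrow> 'v set \<Rightarrow> int" where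
  "u_imset V D Bi B = (\<Sum>A\<in>{A. B \<subseteq> A \<and> A \<subseteq> V}. (-1) ^ card (A - B) * (1 - char_imset V D Bi A))"

end

theory Submission
  imports Defs
begin

lemma alt_sum0:
  assumes "finite T" "C \<subseteq> T"
  shows "(\<Sum>A\<in>{A. C \<subseteq> A \<and> A \<subseteq> T}. (-1::int) ^ card (A - C)) = (if C = T then 1 else 0)"
proof (cases "C = T")
  case True
  then have "{A. C \<subseteq> A \<and> A \<subseteq> T} = {T}" by auto
  then show ?thesis using True by simp
next
  case False
  then have CT: "C \<subset> T" using assms by auto
  have fC: "finite C" using assms finite_subset by blast
  have eq: "(-1::int) ^ card (A - C) = (-1) ^ card C * (-1) ^ card A" if "C \<subseteq> A" "A \<subseteq> T" for A
  proof -
    have "finite A" using that assms finite_subset by blast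
    then have "card A = card (A - C) + card C"
      using that fC by (metis card_Diff_subset le_add_diff_inverse2 card_mono)
    then have "(-1::int) ^ card A = (-1) ^ card (A - C) * (-1) ^ card C" by (simp add: power_add)
    then show ?thesis by (simp add: power_add flip: power_mult_distrib)
  qed
  have "(\<Sum>A\<in>{A. C \<subseteq> A \<and> A \<subseteq> T}. (-1::int) ^ card (A - C))
      = (-1) ^ card C * (\<Sum>A\<in>{A. C \<subseteq> A \<and> A \<subseteq> T}. (-1::int) ^ card A)"
    by (simp add: sum_distrib_left eq)
  also have "(\<Sum>A\<in>{A. C \<subseteq> A \<and> A \<subseteq> T}. (-1::int) ^ card A) = 0"
  proof (rule sum_alternating_cancels)
    show "finite {A. C \<subseteq> A \<and> A \<subseteq> T}" using assms by (simp add: finite_subset[of _ "Pow T"] subset_iff)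
    have "card {T'. T' \<subseteq> T \<and> C \<subseteq> T' \<and> even (card T')} = card {T'. T' \<subseteq> T \<and> C \<subseteq> T' \<and> odd (card T')}"
      using card_subsupersets_even_odd[OF assms(1) CT] .
    then show "card {x \<in> {A. C \<subseteq> A \<and> A \<subseteq> T}. even (card x)} = card {x \<in> {A. C \<subseteq> A \<and> A \<subseteq> T}. odd (card x)}"
      by (simp add: conj_commute conj_left_commute)
  qed
  finally show ?thesis using False by simp
qed

lemma head_lemma:
  assumes "finite H" "finite T" "H \<inter> T = {}"
  shows "(\<Sum>A\<in>{A\<in>Pow T. B \<subseteq> H \<union> A}. (-1::int) ^ card (H \<union> A - B))
       = (\<Sum>W\<in>Pow H. (-1) ^ card (H - W) * delta (W \<union> T) B)"
proof -
  have R: "(\<Sum>W\<in>Pow H. (-1) ^ card (H - W) * delta (W \<union> T) B)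
       = (if T \<subseteq> B \<and> B \<subseteq> H \<union> T then (-1::int) ^ card (H - B) else 0)"
  proof -
    have "(\<Sum>W\<in>Pow H. (-1) ^ card (H - W) * delta (W \<union> T) B)
        = (\<Sum>W\<in>Pow H. if W = B - T then (if T \<subseteq> B \<and> B \<subseteq> H \<union> T then (-1::int) ^ card (H - W) else 0) else 0)"
    proof (rule sum.cong[OF refl])
      fix W assume "W \<in> Pow H"
      then have "W \<subseteq> H" by auto
      then have "(B = W \<union> T) \<longleftrightarrow> (W = B - T \<and> T \<subseteq> B \<and> B \<subseteq> H \<union> T)" using assms(3) by blast
      then show "(-1) ^ card (H - W) * delta (W \<union> T) B
        = (if W = B - T then (if T \<subseteq> B \<and> B \<subseteq> H \<union> T then (-1::int) ^ card (H - W) else 0) else 0)"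
        unfolding delta_def by auto
    qed
    also have "\<dots> = (if B - T \<in> Pow H then (if T \<subseteq> B \<and> B \<subseteq> H \<union> T then (-1::int) ^ card (H - (B - T)) else 0) else 0)"
      by (rule sum.delta) (simp add: assms(1))
    also have "\<dots> = (if T \<subseteq> B \<and> B \<subseteq> H \<union> T then (-1::int) ^ card (H - B) else 0)"
    proof -
      have "H - (B - T) = H - B" using assms(3) by blast
      then show ?thesis by auto
    qed
    finally show ?thesis .
  qed
  show ?thesis
  proof (cases "B \<subseteq> H \<union> T")
    case False
    then have "{A\<in>Pow T. B \<subseteq> H \<union> A} = {}" by blast
    then show ?thesis using R False by (simp only:) simp
  next
    case True
    have S: "{A\<in>Pow T. B \<subseteq> H \<union> A} = {A. B \<inter> T \<subseteq> A \<and> A \<subseteq> T}" using True assms(3) by blast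
    have c: "(-1::int) ^ card (H \<union> A - B) = (-1) ^ card (H - B) * (-1) ^ card (A - B \<inter> T)"
      if "A \<subseteq> T" for A
    proof -
      have "H \<union> A - B = (H - B) \<union> (A - B \<inter> T)" using that by blast
      moreover have "finite A" using that assms finite_subset by blast
      moreover have "(H - B) \<inter> (A - B \<inter> T) = {}" using that assms(3) by blast
      ultimately have "card (H \<union> A - B) = card (H - B) + card (A - B \<inter> T)"
        using assms(1) by (simp add: card_Un_disjoint)
      then show ?thesis by (simp add: power_add)
    qed
    have "(\<Sum>A\<in>{A\<in>Pow T. B \<subseteq> H \<union> A}. (-1::int) ^ card (H \<union> A - B))
        = (-1) ^ card (H - B) * (\<Sum>A\<in>{A. B \<inter> T \<subseteq> A \<and> A \<subseteq> T}. (-1::int) ^ card (A - B \<inter> T))"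
      unfolding S by (simp add: sum_distrib_left c)
    also have "\<dots> = (if B \<inter> T = T then (-1) ^ card (H - B) else 0)"
      using alt_sum0[OF assms(2), of "B \<inter> T"] by simp
    finally show ?thesis using R True by (simp add: Int_absorb1 inf.absorb_iff2)
  qed
qed


lemma cyc_contra:
  assumes "acyclic D" "(a,b) \<in> D\<^sup>*" "(b,a) \<in> D\<^sup>*" "a \<noteq> b"
  shows False
proof -
  have "(a,b) \<in> D\<^sup>+" using assms(2,4) by (simp add: rtrancl_eq_or_trancl)
  moreover have "(b,a) \<in> D\<^sup>+" using assms(3,4) by (simp add: rtrancl_eq_or_trancl)
  ultimately have "(a,a) \<in> D\<^sup>+" by auto
  then show False using assms(1) by (simp add: acyclic_def)
qed

lemma head_facts:
  assumes adm: "admg V D Bi" and hd: "is_head V D Bi H"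
  shows "tail V D Bi H \<subseteq> anS V D H - H" "H \<subseteq> anS V D H" "H \<subseteq> V" "finite H"
proof -
  have mg: "mixed_graph V D Bi" and ac: "acyclic D" using adm by (auto simp: admg_def)
  have DV: "D \<subseteq> V \<times> V" and fV: "finite V" using mg by (auto simp: mixed_graph_def)
  have HV: "H \<subseteq> V" and bar: "barren V D H = H" using hd by (auto simp: is_head_def)
  show "H \<subseteq> V" by fact
  show "finite H" using HV fV finite_subset by blast
  show HA: "H \<subseteq> anS V D H" using HV by (auto simp: anS_def an_def)
  have dsub: "disS Bi (anS V D H) H \<subseteq> anS V D H" by (auto simp: disS_def dis_def)
  have "paS D (disS Bi (anS V D H) H) \<subseteq> anS V D H - H"
  proof
    fix p assume "p \<in> paS D (disS Bi (anS V D H) H)"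
    then obtain d where pd: "(p,d) \<in> D" and d: "d \<in> anS V D H" using dsub by (auto simp: paS_def pa_def)
    then obtain h where h: "h \<in> H" "(d,h) \<in> D\<^sup>*" by (auto simp: anS_def an_def)
    have pV: "p \<in> V" using pd DV by auto
    have ph: "(p,h) \<in> D\<^sup>*" using pd h by auto
    have "p \<notin> H"
    proof
      assume pH: "p \<in> H"
      have "h \<in> de V D p \<inter> H" using ph h HV by (auto simp: de_def)
      moreover have "de V D p \<inter> H = {p}" proof - have "p \<in> barren V D H" using bar pH by simp then show ?thesis by (simp add: barren_def) qed
      ultimately have "h = p" by auto
      then have "(p,p) \<in> D\<^sup>+" using pd h(2) by auto
      then show False using ac by (simp add: acyclic_def)
    qed
    then show "p \<in> anS V D H - H" using pV ph h by (auto simp: anS_def an_def)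
  qed
  then show "tail V D Bi H \<subseteq> anS V D H - H" using dsub by (auto simp: tail_def)
qed

lemma barren_eq:
  assumes ac: "acyclic D" and HS: "H \<subseteq> S" and SA: "S \<subseteq> anS V D H" and HV: "H \<subseteq> V"
    and bar: "barren V D H = H"
  shows "barren V D S = H"
proof
  show "barren V D S \<subseteq> H"
  proof
    fix s assume s: "s \<in> barren V D S"
    then have sS: "s \<in> S" and ds: "de V D s \<inter> S = {s}" by (auto simp: barren_def)
    then obtain h where h: "h \<in> H" "(s,h) \<in> D\<^sup>*" using SA by (auto simp: anS_def an_def)
    then have "h \<in> de V D s \<inter> S" using HV HS by (auto simp: de_def)
    then show "s \<in> H" using ds h by auto
  qed
  show "H \<subseteq> barren V D S"
  proof
    fix h assume h: "h \<in> H"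
    have dh: "de V D h \<inter> H = {h}" proof - have "h \<in> barren V D H" using bar h by simp then show ?thesis by (simp add: barren_def) qed
    have "de V D h \<inter> S = {h}"
    proof (rule ccontr)
      assume "de V D h \<inter> S \<noteq> {h}"
      moreover have "h \<in> de V D h \<inter> S" using h HV HS by (auto simp: de_def)
      ultimately obtain s where s: "s \<in> S" "(h,s) \<in> D\<^sup>*" "s \<noteq> h" by (auto simp: de_def)
      then obtain h' where h': "h' \<in> H" "(s,h') \<in> D\<^sup>*" using SA by (auto simp: anS_def an_def)
      then have "(h,h') \<in> D\<^sup>*" using s by auto
      then have "h' \<in> de V D h \<inter> H" using h' HV by (auto simp: de_def)
      then have "h' = h" using dh by auto
      then show False using cyc_contra[OF ac s(2)] h' s by auto
    qed
    then show "h \<in> barren V D S" using h HS by (auto simp: barren_def)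
  qed
qed


theorem theorem3p6:
  fixes V :: "'v set" and D Bi :: "('v \<times> 'v) set"
  assumes "MAG V D Bi"
  shows "\<forall>B. B \<subseteq> V \<longrightarrow>
    u_imset V D Bi B =
      delta V B - delta {} B
      - (\<Sum>H\<in>heads V D Bi. \<Sum>W\<in>Pow H.
            (-1) ^ card (H - W) * delta (W \<union> tail V D Bi H) B)"
proof (intro allI impI)
  fix B assume BV: "B \<subseteq> V"
  have adm: "admg V D Bi" using assms by (simp add: MAG_def)
  have mg: "mixed_graph V D Bi" and ac: "acyclic D" using adm by (auto simp: admg_def)
  have fV: "finite V" using mg by (simp add: mixed_graph_def)
  define hs where "hs = heads V D Bi"
  define tl where "tl = tail V D Bi"
  define X where "X = {A. B \<subseteq> A \<and> A \<subseteq> V}"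
  define P' where "P' = {H \<union> A | H A. H \<in> hs \<and> A \<subseteq> tl H}"
  have par: "param_sets V D Bi = insert {} P'" by (simp add: param_sets_def P'_def hs_def tl_def)
  have fX: "finite X" unfolding X_def using fV by (simp add: finite_subset[of _ "Pow V"] subset_iff)
  have hsV: "hs \<subseteq> Pow V" by (auto simp: hs_def heads_def is_head_def)
  have fhs: "finite hs" using hsV fV finite_subset by blast
  have HF: "tl H \<subseteq> anS V D H - H" "H \<subseteq> anS V D H" "H \<subseteq> V" "finite H" "H \<noteq> {}"
    "barren V D H = H" if "H \<in> hs" for H
  proof -
    have ih: "is_head V D Bi H" using that by (simp add: hs_def heads_def)
    note hf = head_facts[OF adm ih]
    show "tl H \<subseteq> anS V D H - H" using hf(1) by (simp add: tl_def)
    show "H \<subseteq> anS V D H" by (rule hf(2))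
    show "H \<subseteq> V" by (rule hf(3))
    show "finite H" by (rule hf(4))
    show "H \<noteq> {}" using ih by (simp add: is_head_def)
    show "barren V D H = H" using ih by (simp add: is_head_def)
  qed
  have anV: "anS V D H \<subseteq> V" for H by (auto simp: anS_def an_def)
  have ftl: "finite (tl H)" if "H \<in> hs" for H
  proof (rule finite_subset[OF _ fV])
    show "tl H \<subseteq> V" using HF(1)[OF that] anV[of H] by blast
  qed
  have bar: "barren V D (H \<union> A) = H" if "H \<in> hs" "A \<subseteq> tl H" for H A
  proof (rule barren_eq[OF ac])
    show "H \<subseteq> H \<union> A" by simp
    show "H \<union> A \<subseteq> anS V D H" using HF(1,2)[OF that(1)] that(2) by blast
    show "H \<subseteq> V" by (rule HF(3)[OF that(1)])
    show "barren V D H = H" by (rule HF(6)[OF that(1)])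
  qed
  have uB: "u_imset V D Bi B = (\<Sum>A\<in>X. (-1) ^ card (A - B)) - (\<Sum>A\<in>X. (-1) ^ card (A - B) * char_imset V D Bi A)"
    unfolding u_imset_def X_def by (simp add: algebra_simps sum_subtractf)
  have s1: "(\<Sum>A\<in>X. (-1::int) ^ card (A - B)) = delta V B"
    unfolding X_def delta_def using alt_sum0[OF fV BV] by auto
  have "(\<Sum>A\<in>X. (-1) ^ card (A - B) * char_imset V D Bi A)
      = (\<Sum>A\<in>X. if A \<in> param_sets V D Bi then (-1::int) ^ card (A - B) else 0)"
    by (rule sum.cong) (auto simp: char_imset_def)
  also have "\<dots> = (\<Sum>A\<in>X \<inter> param_sets V D Bi. (-1::int) ^ card (A - B))"
    by (simp add: sum.inter_restrict[OF fX])
  also have "X \<inter> param_sets V D Bi = (X \<inter> {{}}) \<union> (X \<inter> P')" using par by auto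
  also have "(\<Sum>A\<in>(X \<inter> {{}}) \<union> (X \<inter> P'). (-1::int) ^ card (A - B))
      = (\<Sum>A\<in>X \<inter> {{}}. (-1::int) ^ card (A - B)) + (\<Sum>A\<in>X \<inter> P'. (-1::int) ^ card (A - B))"
  proof (rule sum.union_disjoint)
    show "finite (X \<inter> {{}})" by simp
    show "finite (X \<inter> P')" using fX by simp
    have "{} \<notin> P'" using HF(5) by (auto simp: P'_def)
    then show "X \<inter> {{}} \<inter> (X \<inter> P') = {}" by auto
  qed
  also have "(\<Sum>A\<in>X \<inter> {{}}. (-1::int) ^ card (A - B)) = delta {} B"
  proof (cases "B = {}")
    case True
    then have "X \<inter> {{}} = {{}}" by (auto simp: X_def)
    then show ?thesis using True by (simp add: delta_def)
  next
    case False
    then have "X \<inter> {{}} = {}" by (auto simp: X_def)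
    then show ?thesis using False by (simp add: delta_def)
  qed
  also have "(\<Sum>A\<in>X \<inter> P'. (-1::int) ^ card (A - B))
      = (\<Sum>H\<in>hs. \<Sum>W\<in>Pow H. (-1) ^ card (H - W) * delta (W \<union> tl H) B)"
  proof -
    define Sig where "Sig = Sigma hs (\<lambda>H. {A \<in> Pow (tl H). B \<subseteq> H \<union> A})"
    define f where "f = (\<lambda>(H::'v set, A::'v set). H \<union> A)"
    have img: "X \<inter> P' = f ` Sig"
    proof
      show "X \<inter> P' \<subseteq> f ` Sig"
      proof
        fix S assume "S \<in> X \<inter> P'"
        then obtain H A where "H \<in> hs" "A \<subseteq> tl H" "S = H \<union> A" "B \<subseteq> S"
          by (auto simp: X_def P'_def)
        then show "S \<in> f ` Sig" unfolding Sig_def f_def by (auto intro!: image_eqI[of _ _ "(H,A)"])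
      qed
      show "f ` Sig \<subseteq> X \<inter> P'"
      proof
        fix S assume "S \<in> f ` Sig"
        then obtain H A where HA: "H \<in> hs" "A \<subseteq> tl H" "S = H \<union> A" "B \<subseteq> S"
          by (auto simp: Sig_def f_def)
        have "S \<subseteq> V" using HA(2,3) HF(1,3)[OF HA(1)] anV[of H] by blast
        then show "S \<in> X \<inter> P'" using HA by (auto simp: X_def P'_def)
      qed
    qed
    have inj: "inj_on f Sig"
    proof (rule inj_onI)
      fix x y assume x: "x \<in> Sig" and y: "y \<in> Sig" and e: "f x = f y"
      obtain H A where xe: "x = (H,A)" "H \<in> hs" "A \<subseteq> tl H" using x by (auto simp: Sig_def)
      obtain H' A' where ye: "y = (H',A')" "H' \<in> hs" "A' \<subseteq> tl H'" using y by (auto simp: Sig_def)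
      have e': "H \<union> A = H' \<union> A'" using e xe ye by (simp add: f_def)
      have "H = H'" using bar[OF xe(2,3)] bar[OF ye(2,3)] e' by simp
      moreover have "A = (H \<union> A) - H" using HF(1)[OF xe(2)] xe(3) by blast
      moreover have "A' = (H' \<union> A') - H'" using HF(1)[OF ye(2)] ye(3) by blast
      ultimately show "x = y" using xe ye e' by simp
    qed
    have "(\<Sum>A\<in>X \<inter> P'. (-1::int) ^ card (A - B)) = (\<Sum>p\<in>Sig. (-1::int) ^ card (f p - B))"
      unfolding img by (simp add: sum.reindex[OF inj])
    also have "\<dots> = (\<Sum>H\<in>hs. \<Sum>A\<in>{A \<in> Pow (tl H). B \<subseteq> H \<union> A}. (-1::int) ^ card (H \<union> A - B))"
      unfolding Sig_def f_def
      by (subst sum.Sigma) (use fhs ftl in \<open>auto simp: split_def\<close>)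
    also have "\<dots> = (\<Sum>H\<in>hs. \<Sum>W\<in>Pow H. (-1) ^ card (H - W) * delta (W \<union> tl H) B)"
    proof (rule sum.cong[OF refl])
      fix H assume H: "H \<in> hs"
      show "(\<Sum>A\<in>{A \<in> Pow (tl H). B \<subseteq> H \<union> A}. (-1::int) ^ card (H \<union> A - B))
          = (\<Sum>W\<in>Pow H. (-1) ^ card (H - W) * delta (W \<union> tl H) B)"
        by (rule head_lemma) (use HF[OF H] ftl[OF H] in auto)
    qed
    finally show ?thesis .
  qed
  finally show "u_imset V D Bi B =
      delta V B - delta {} B
      - (\<Sum>H\<in>heads V D Bi. \<Sum>W\<in>Pow H.
            (-1) ^ card (H - W) * delta (W \<union> tail V D Bi H) B)"
    using uB s1 by (simp add: hs_def tl_def)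
qed

end
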